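(* If a Banach space $X$ has a seminormalized quasisubsymmetric (Schauder) basis, then $\ell_\infty$ embeds isomorphically into $\mathcal{L}(X)$.
   Context: $\mathcal{L}(X)$ is the space of all bounded linear operators on $X$ with the operator norm. A sequence $(e_n)$ is seminormalized if $0<\inf_n\|e_n\|\le\sup_n\|e_n\|<\infty$. For basic sequences, $(x_n)$ dominates $(y_n)$ if there is $C>0$ with $\|\sum a_ny_n\|\le C\|\sum a_nx_n\|$ for all finitely supported scalar sequences $(a_n)$. A basic sequence $(e_n)$ is quasisubsymmetric if for any two increasing sequences $(k_n)$ and $(\ell_n)$ of positive integers with $k_n\le\ell_n$ for all $n$, $(e_{k_n})$ dominates $(e_{\ell_n})$. *)

theory Defs
  imports "HOL-Analysis.Analysis"
begin

definition schauder_basis :: "(nat \<Rightarrow> 'a::real_normed_vector) \<Rightarrow> bool" where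
  "schauder_basis e \<longleftrightarrow> (\<forall>x. \<exists>!a::nat \<Rightarrow> real. (\<lambda>n. a n *\<^sub>R e n) sums x)"

definition seminormalized :: "(nat \<Rightarrow> 'a::real_normed_vector) \<Rightarrow> bool" where
  "seminormalized e \<longleftrightarrow> (\<exists>c C. 0 < c \<and> (\<forall>n. c \<le> norm (e n) \<and> norm (e n) \<le> C))"

text \<open>(x n) dominates (y n): for all finitely supported scalar sequences
  (here: supported in some initial segment {..<N}) the norm inequality holds.\<close>
definition dominates :: "(nat \<Rightarrow> 'a::real_normed_vector) \<Rightarrow> (nat \<Rightarrow> 'a) \<Rightarrow> bool" where
  "dominates x y \<longleftrightarrow> (\<exists>C>0. \<forall>(a::nat \<Rightarrow> real) N.
      norm (\<Sum>n<N. a n *\<^sub>R y n) \<le> C * norm (\<Sum>n<N. a n *\<^sub>R x n))"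

definition quasisubsymmetric :: "(nat \<Rightarrow> 'a::real_normed_vector) \<Rightarrow> bool" where
  "quasisubsymmetric e \<longleftrightarrow> (\<forall>k l :: nat \<Rightarrow> nat.
      strict_mono k \<and> strict_mono l \<and> (\<forall>n. k n \<le> l n) \<longrightarrow> dominates (e \<circ> k) (e \<circ> l))"

definition isomorphic_embedding :: "('a::real_normed_vector \<Rightarrow> 'b::real_normed_vector) \<Rightarrow> bool" where
  "isomorphic_embedding T \<longleftrightarrow> bounded_linear T \<and> (\<exists>c>0. \<forall>x. c * norm x \<le> norm (T x))"

end

theory Submission
  imports Defs
begin

definition coef :: "(nat \<Rightarrow> 'a::real_normed_vector) \<Rightarrow> 'a \<Rightarrow> nat \<Rightarrow> real" where
  "coef e x = (THE a. (\<lambda>n. a n *\<^sub>R e n) sums x)"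

lemma coef_ex1: "schauder_basis e \<Longrightarrow> \<exists>!a. (\<lambda>n. a n *\<^sub>R e n) sums x"
  unfolding schauder_basis_def by blast

lemma coef_sums: "schauder_basis e \<Longrightarrow> (\<lambda>n. coef e x n *\<^sub>R e n) sums x"
  unfolding coef_def by (rule theI'[OF coef_ex1])

lemma coef_unique: "schauder_basis e \<Longrightarrow> (\<lambda>n. a n *\<^sub>R e n) sums x \<Longrightarrow> coef e x = a"
  unfolding coef_def by (rule the1_equality[OF coef_ex1])

lemma coef_add: assumes "schauder_basis e" shows "coef e (x + y) = (\<lambda>n. coef e x n + coef e y n)"
proof (rule coef_unique[OF assms])
  show "(\<lambda>n. (coef e x n + coef e y n) *\<^sub>R e n) sums (x + y)"
    using sums_add[OF coef_sums[OF assms, of x] coef_sums[OF assms, of y]]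
    by (simp add: scaleR_add_left)
qed

lemma coef_scale: assumes "schauder_basis e" shows "coef e (r *\<^sub>R x) = (\<lambda>n. r * coef e x n)"
proof (rule coef_unique[OF assms])
  show "(\<lambda>n. (r * coef e x n) *\<^sub>R e n) sums (r *\<^sub>R x)"
    using sums_scaleR_right[OF coef_sums[OF assms, of x], of r] by simp
qed

lemma coef_finite: assumes "schauder_basis e"
  shows "coef e (\<Sum>n<N. a n *\<^sub>R e n) = (\<lambda>n. if n < N then a n else 0)"
proof (rule coef_unique[OF assms])
  have "(\<lambda>n. if n \<in> {..<N} then a n *\<^sub>R e n else 0) sums (\<Sum>n\<in>{..<N}. a n *\<^sub>R e n)"
    by (rule sums_If_finite_set) simp
  moreover have "(\<lambda>n. (if n < N then a n else 0) *\<^sub>R e n) = (\<lambda>n. if n \<in> {..<N} then a n *\<^sub>R e n else 0)"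
    by auto
  ultimately show "(\<lambda>n. (if n < N then a n else 0) *\<^sub>R e n) sums (\<Sum>n<N. a n *\<^sub>R e n)"
    by simp
qed

lemma coef_basis: assumes "schauder_basis e"
  shows "coef e (e m) = (\<lambda>n. if n = m then 1 else 0)"
proof -
  have "(\<Sum>n<Suc m. (if n = m then 1 else 0) *\<^sub>R e n) = (\<Sum>n<Suc m. if n = m then e m else 0)"
    by (rule sum.cong) auto
  also have "\<dots> = e m" by (subst sum.delta) auto
  finally have "(\<Sum>n<Suc m. (if n = m then 1 else 0) *\<^sub>R e n) = e m" .
  then show ?thesis using coef_finite[OF assms, where N="Suc m" and a="\<lambda>n. if n = m then 1 else 0"]
    by (auto simp: fun_eq_iff)
qed

definition Op :: "(nat \<Rightarrow> 'a::real_normed_vector) \<Rightarrow> (nat \<Rightarrow> 'b::real_normed_vector) \<Rightarrow> 'a \<Rightarrow> 'b" where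
  "Op e f x = (\<Sum>n. coef e x n *\<^sub>R f n)"

definition dom_bound :: "(nat \<Rightarrow> 'a::real_normed_vector) \<Rightarrow> (nat \<Rightarrow> 'b::real_normed_vector) \<Rightarrow> real \<Rightarrow> bool" where
  "dom_bound e f C \<longleftrightarrow> (\<forall>(a::nat\<Rightarrow>real) N. norm (\<Sum>n<N. a n *\<^sub>R f n) \<le> C * norm (\<Sum>n<N. a n *\<^sub>R e n))"

lemma dom_boundD: "dom_bound e f C \<Longrightarrow> norm (\<Sum>n<N. a n *\<^sub>R f n) \<le> C * norm (\<Sum>n<N. a n *\<^sub>R e n)"
  unfolding dom_bound_def by blast

lemma Op_summable:
  fixes e :: "nat \<Rightarrow> 'a::banach" and f :: "nat \<Rightarrow> 'b::banach"
  assumes b: "schauder_basis e" and d: "dom_bound e f C" and C: "C \<ge> 0"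
  shows "summable (\<lambda>n. coef e x n *\<^sub>R f n)"
proof -
  let ?c = "coef e x"
  have s: "summable (\<lambda>n. ?c n *\<^sub>R e n)" by (rule sums_summable[OF coef_sums[OF b]])
  have key: "norm (sum (\<lambda>n. ?c n *\<^sub>R f n) {m..<n}) \<le> C * norm (sum (\<lambda>n. ?c n *\<^sub>R e n) {m..<n})" for m n
  proof -
    let ?a = "\<lambda>k. if m \<le> k then ?c k else 0"
    have 1: "(\<Sum>k<n. ?a k *\<^sub>R g k) = sum (\<lambda>k. ?c k *\<^sub>R g k) {m..<n}" for g :: "nat \<Rightarrow> 'c::real_normed_vector"
    proof -
      have "(\<Sum>k<n. ?a k *\<^sub>R g k) = (\<Sum>k\<in>{..<n}. if k \<in> {m..<n} then ?c k *\<^sub>R g k else 0)"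
        by (rule sum.cong) auto
      also have "\<dots> = sum (\<lambda>k. ?c k *\<^sub>R g k) ({..<n} \<inter> {m..<n})"
        by (rule sum.inter_restrict[symmetric]) simp
      also have "{..<n} \<inter> {m..<n} = {m..<n}" by auto
      finally show ?thesis .
    qed
    have "norm (\<Sum>k<n. ?a k *\<^sub>R f k) \<le> C * norm (\<Sum>k<n. ?a k *\<^sub>R e k)"
      by (rule dom_boundD[OF d])
    then show ?thesis unfolding 1 .
  qed
  show ?thesis unfolding summable_Cauchy
  proof (intro allI impI)
    fix r :: real assume r: "r > 0"
    have pos: "r / (C + 1) > 0" using r C by simp
    have ex: "\<exists>N. \<forall>m\<ge>N. \<forall>n. norm (sum (\<lambda>n. ?c n *\<^sub>R e n) {m..<n}) < r / (C + 1)"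
      using mp[OF spec[OF s[unfolded summable_Cauchy], of "r / (C + 1)"] pos] .
    obtain N where N: "\<forall>m\<ge>N. \<forall>n. norm (sum (\<lambda>n. ?c n *\<^sub>R e n) {m..<n}) < r / (C + 1)"
      using ex by blast
    show "\<exists>N. \<forall>m\<ge>N. \<forall>n. norm (sum (\<lambda>n. ?c n *\<^sub>R f n) {m..<n}) < r"
    proof (intro exI allI impI)
      fix m n assume "N \<le> m"
      then have h: "norm (sum (\<lambda>n. ?c n *\<^sub>R e n) {m..<n}) < r / (C + 1)" using N by auto
      have "C * norm (sum (\<lambda>n. ?c n *\<^sub>R e n) {m..<n}) \<le> C * (r / (C+1))"
        using h C by (intro mult_left_mono) auto
      also have "\<dots> < r" using C r by (simp add: field_simps)
      finally show "norm (sum (\<lambda>n. ?c n *\<^sub>R f n) {m..<n}) < r" using key[of m n] by linarith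
    qed
  qed
qed

lemma Op_sums:
  fixes e :: "nat \<Rightarrow> 'a::banach" and f :: "nat \<Rightarrow> 'b::banach"
  assumes b: "schauder_basis e" and d: "dom_bound e f C" and C: "C \<ge> 0"
  shows "(\<lambda>n. coef e x n *\<^sub>R f n) sums Op e f x"
  unfolding Op_def by (rule summable_sums[OF Op_summable[OF assms]])

lemma Op_norm:
  fixes e :: "nat \<Rightarrow> 'a::banach" and f :: "nat \<Rightarrow> 'b::banach"
  assumes b: "schauder_basis e" and d: "dom_bound e f C" and C: "C \<ge> 0"
  shows "norm (Op e f x) \<le> C * norm x"
proof -
  have 1: "(\<lambda>N. norm (\<Sum>n<N. coef e x n *\<^sub>R f n)) \<longlonglongrightarrow> norm (Op e f x)"
    using Op_sums[OF assms, of x] unfolding sums_def by (intro tendsto_norm)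
  have 2: "(\<lambda>N. C * norm (\<Sum>n<N. coef e x n *\<^sub>R e n)) \<longlonglongrightarrow> C * norm x"
    using coef_sums[OF b, of x] unfolding sums_def by (intro tendsto_mult tendsto_norm tendsto_const)
  show ?thesis
    by (rule LIMSEQ_le[OF 1 2]) (use dom_boundD[OF d] in auto)
qed

lemma Op_linear:
  fixes e :: "nat \<Rightarrow> 'a::banach" and f :: "nat \<Rightarrow> 'b::banach"
  assumes b: "schauder_basis e" and d: "dom_bound e f C" and C: "C \<ge> 0"
  shows "bounded_linear (Op e f)"
proof (rule bounded_linear_intro)
  fix x y
  have "(\<lambda>n. coef e (x + y) n *\<^sub>R f n) sums (Op e f x + Op e f y)"
    using sums_add[OF Op_sums[OF assms, of x] Op_sums[OF assms, of y]]
    by (simp add: coef_add[OF b] scaleR_add_left)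
  then show "Op e f (x + y) = Op e f x + Op e f y"
    using Op_sums[OF assms, of "x+y"] sums_unique2 by blast
next
  fix r x
  have "(\<lambda>n. coef e (r *\<^sub>R x) n *\<^sub>R f n) sums (r *\<^sub>R Op e f x)"
    using sums_scaleR_right[OF Op_sums[OF assms, of x], of r]
    by (simp add: coef_scale[OF b])
  then show "Op e f (r *\<^sub>R x) = r *\<^sub>R Op e f x"
    using Op_sums[OF assms, of "r *\<^sub>R x"] sums_unique2 by blast
next
  fix x show "norm (Op e f x) \<le> norm x * C" using Op_norm[OF assms] by (simp add: mult.commute)
qed

lemma Op_basis:
  fixes e :: "nat \<Rightarrow> 'a::banach" and f :: "nat \<Rightarrow> 'b::banach"
  assumes b: "schauder_basis e" and d: "dom_bound e f C" and C: "C \<ge> 0"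
  shows "Op e f (e m) = f m"
proof -
  have "(\<lambda>n. coef e (e m) n *\<^sub>R f n) sums f m"
  proof -
    have "(\<lambda>n. coef e (e m) n *\<^sub>R f n) = (\<lambda>n. if n = m then f m else 0)"
      by (auto simp: coef_basis[OF b])
    then show ?thesis using sums_single[of m "\<lambda>_. f m"] by simp
  qed
  then show ?thesis using Op_sums[OF assms, of "e m"] sums_unique2 by blast
qed


lemma qs_dom:
  fixes e :: "nat \<Rightarrow> 'a::real_normed_vector"
  assumes qs: "quasisubsymmetric e" and l: "strict_mono l"
  shows "\<exists>C>0. dom_bound e (\<lambda>n. e (l n)) C"
proof -
  have "strict_mono (id::nat\<Rightarrow>nat) \<and> strict_mono l \<and> (\<forall>n. id n \<le> l n)"
    using l strict_mono_imp_increasing[OF l] by (simp add: strict_mono_def)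
  then have "dominates (e \<circ> id) (e \<circ> l)"
    using mp[OF spec[OF spec[OF qs[unfolded quasisubsymmetric_def], of id], of l]] by blast
  then show ?thesis unfolding dominates_def dom_bound_def by simp
qed

lemma not_Cauchy:
  fixes e :: "nat \<Rightarrow> 'a::banach"
  assumes b: "schauder_basis e" and sn: "seminormalized e" and qs: "quasisubsymmetric e"
  shows "\<not> Cauchy e"
proof
  assume "Cauchy e"
  then obtain y where ey: "e \<longlonglongrightarrow> y" unfolding Cauchy_convergent_iff convergent_def by blast
  obtain c where c: "0 < c" "\<And>n. c \<le> norm (e n)" using sn unfolding seminormalized_def by blast
  have "c \<le> norm y"
    by (rule LIMSEQ_le_const[OF tendsto_norm[OF ey]]) (use c in auto)
  with c have y0: "y \<noteq> 0" by auto
  obtain C where C: "C > 0" "dom_bound e (\<lambda>n. e (Suc n)) C"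
    using qs_dom[OF qs, of Suc] by (auto simp: strict_mono_Suc_iff)
  let ?S = "Op e (\<lambda>n. e (Suc n))"
  have lin: "bounded_linear ?S" using Op_linear[OF b C(2)] C by simp
  have Se: "?S (e m) = e (Suc m)" for m using Op_basis[OF b C(2)] C by simp
  have "(\<lambda>m. ?S (e m)) \<longlonglongrightarrow> ?S y" by (rule bounded_linear.tendsto[OF lin ey])
  moreover have "(\<lambda>m. ?S (e m)) \<longlonglongrightarrow> y" unfolding Se by (rule LIMSEQ_Suc[OF ey])
  ultimately have Sy: "?S y = y" using LIMSEQ_unique by blast
  have sm: "(\<lambda>n. coef e y n *\<^sub>R e (Suc n)) sums y"
    using Op_sums[OF b C(2) less_imp_le[OF C(1)], of y] unfolding Sy .
  define bb where "bb = (\<lambda>n. case n of 0 \<Rightarrow> 0 | Suc m \<Rightarrow> coef e y m)"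
  have "(\<lambda>n. bb (Suc n) *\<^sub>R e (Suc n)) sums y" using sm by (simp add: bb_def)
  then have "(\<lambda>n. bb n *\<^sub>R e n) sums (y + bb 0 *\<^sub>R e 0)"
    by (subst (asm) sums_Suc_iff)
  then have "(\<lambda>n. bb n *\<^sub>R e n) sums y" by (simp add: bb_def)
  then have cb: "coef e y = bb" by (rule coef_unique[OF b])
  have z: "coef e y n = 0" for n
  proof (induction n)
    case 0 then show ?case using fun_cong[OF cb, of 0] by (simp add: bb_def)
  next
    case (Suc n) then show ?case using fun_cong[OF cb, of "Suc n"] by (simp add: bb_def)
  qed
  have "(\<lambda>n. coef e y n *\<^sub>R e n) sums y" by (rule coef_sums[OF b])
  then have "(\<lambda>n. 0::'a) sums y" by (simp add: z)
  then have "y = 0" using sums_zero sums_unique2 by blast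
  with y0 show False by simp
qed

lemma pairs:
  fixes e :: "nat \<Rightarrow> 'a::real_normed_vector"
  assumes nc: "\<not> Cauchy e"
  shows "\<exists>\<delta>>0. \<exists>p q. \<forall>n. p n < q n \<and> q n < p (Suc n) \<and> \<delta> \<le> norm (e (q n) - e (p n))"
proof -
  from nc obtain \<delta> where d: "\<delta> > 0" "\<forall>M. \<exists>m\<ge>M. \<exists>n\<ge>M. \<not> dist (e m) (e n) < \<delta>"
    unfolding Cauchy_def by blast
  have "\<forall>M. \<exists>ij. M \<le> fst ij \<and> fst ij < snd ij \<and> \<delta> \<le> norm (e (snd ij) - e (fst ij))"
  proof
    fix M
    obtain m n where mn: "m \<ge> M" "n \<ge> M" "\<not> dist (e m) (e n) < \<delta>" using d by blast
    then have "m \<noteq> n" using d(1) by auto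
    show "\<exists>ij. M \<le> fst ij \<and> fst ij < snd ij \<and> \<delta> \<le> norm (e (snd ij) - e (fst ij))"
    proof (cases "m < n")
      case True
      then show ?thesis using mn by (intro exI[of _ "(m, n)"]) (auto simp: dist_norm norm_minus_commute)
    next
      case False
      then show ?thesis using mn \<open>m \<noteq> n\<close> by (intro exI[of _ "(n, m)"]) (auto simp: dist_norm)
    qed
  qed
  then obtain g where g: "\<And>M. M \<le> fst (g M) \<and> fst (g M) < snd (g M) \<and> \<delta> \<le> norm (e (snd (g M)) - e (fst (g M)))"
    by metis
  define pq where "pq = rec_nat (g 0) (\<lambda>n s. g (Suc (snd s)))"
  have pq0: "pq 0 = g 0" and pqS: "pq (Suc n) = g (Suc (snd (pq n)))" for n by (simp_all add: pq_def)
  have H: "\<forall>n. fst (pq n) < snd (pq n) \<and> snd (pq n) < fst (pq (Suc n)) \<and> \<delta> \<le> norm (e (snd (pq n)) - e (fst (pq n)))"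
  proof
    fix n
    have A: "fst (pq k) < snd (pq k) \<and> \<delta> \<le> norm (e (snd (pq k)) - e (fst (pq k)))" for k
      by (cases k) (use g in \<open>simp_all add: pq0 pqS\<close>)
    have "Suc (snd (pq n)) \<le> fst (pq (Suc n))" using g by (simp add: pqS)
    then show "fst (pq n) < snd (pq n) \<and> snd (pq n) < fst (pq (Suc n)) \<and> \<delta> \<le> norm (e (snd (pq n)) - e (fst (pq n)))"
      using A[of n] by simp
  qed
  have "\<exists>p q. \<forall>n. p n < q n \<and> q n < p (Suc n) \<and> \<delta> \<le> norm (e (q n) - e (p n))"
    by (intro exI[of _ "\<lambda>n. fst (pq n)"] exI[of _ "\<lambda>n. snd (pq n)"]) (use H in simp)
  with d(1) show ?thesis by blast
qed


definition Bnd :: "(nat \<Rightarrow> 'a::real_normed_vector) \<Rightarrow> (nat \<Rightarrow> 'a) \<Rightarrow> nat set \<Rightarrow> real \<Rightarrow> bool" where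
  "Bnd e d A K \<longleftrightarrow> dom_bound e (\<lambda>n. if n \<in> A then d n else 0) K"

lemma dom_bound_mono: "dom_bound e f K \<Longrightarrow> K \<le> K' \<Longrightarrow> dom_bound e f K'"
  unfolding dom_bound_def by (meson dual_order.trans mult_right_mono norm_ge_zero)

lemma loc:
  fixes e d :: "nat \<Rightarrow> 'a::real_normed_vector"
  assumes each: "\<forall>A. \<exists>K. 0 \<le> K \<and> Bnd e d A K"
    and F: "F \<subseteq> {..<N}" and K: "0 \<le> K" and pre: "\<forall>A. A \<inter> {..<N} = F \<longrightarrow> Bnd e d A K"
  shows "\<exists>K'. \<forall>A. Bnd e d A K'"
proof -
  obtain CC where CC: "\<And>G. 0 \<le> CC G \<and> Bnd e d G (CC G)" using each by metis
  define K' where "K' = 2 * K + (\<Sum>G\<in>Pow {..<N}. CC G)"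
  have "Bnd e d A K'" for A
    unfolding Bnd_def dom_bound_def
  proof (intro allI)
    fix a :: "nat \<Rightarrow> real" and M
    define A' where "A' = F \<union> (A - {..<N})"
    define G where "G = A \<inter> {..<N}"
    let ?x = "norm (\<Sum>n<M. a n *\<^sub>R e n)"
    let ?S = "\<lambda>B. (\<Sum>n<M. a n *\<^sub>R (if n \<in> B then d n else 0))"
    have termeq: "a n *\<^sub>R (if n \<in> A then d n else 0) = a n *\<^sub>R (if n \<in> A' then d n else 0)
        - a n *\<^sub>R (if n \<in> F then d n else 0) + a n *\<^sub>R (if n \<in> G then d n else 0)" for n
      using F by (cases "n < N") (auto simp: A'_def G_def)
    have eq: "?S A = ?S A' - ?S F + ?S G"
      by (simp only: termeq sum.distrib sum_subtractf)
    have A'p: "A' \<inter> {..<N} = F" using F by (auto simp: A'_def)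
    have Fp: "F \<inter> {..<N} = F" using F by auto
    have "Bnd e d A' K" using pre A'p by blast
    then have b1: "norm (?S A') \<le> K * ?x" unfolding Bnd_def by (rule dom_boundD)
    have "Bnd e d F K" using pre Fp by blast
    then have b2: "norm (?S F) \<le> K * ?x" unfolding Bnd_def by (rule dom_boundD)
    have "Bnd e d G (CC G)" using CC[of G] by blast
    then have b3: "norm (?S G) \<le> CC G * ?x" unfolding Bnd_def by (rule dom_boundD)
    have "CC G \<le> (\<Sum>G\<in>Pow {..<N}. CC G)"
      by (rule member_le_sum) (use CC in \<open>auto simp: G_def\<close>)
    then have b4: "CC G * ?x \<le> (\<Sum>G\<in>Pow {..<N}. CC G) * ?x" by (rule mult_right_mono) simp
    have "norm (?S A) \<le> norm (?S A') + norm (?S F) + norm (?S G)"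
      unfolding eq by (rule order_trans[OF norm_triangle_ineq add_right_mono[OF norm_triangle_ineq4]])
    also have "\<dots> \<le> K' * ?x" using b1 b2 b3 b4 by (simp add: K'_def algebra_simps)
    finally show "norm (?S A) \<le> K' * ?x" .
  qed
  then show ?thesis by blast
qed

lemma hump:
  fixes e d :: "nat \<Rightarrow> 'a::real_normed_vector"
  assumes each: "\<forall>A. \<exists>K. 0 \<le> K \<and> Bnd e d A K"
  shows "\<exists>K. \<forall>A. Bnd e d A K"
proof (rule ccontr)
  assume nb: "\<not> (\<exists>K. \<forall>A. Bnd e d A K)"
  define P where "P = (\<lambda>F N (k::nat) (t:: nat set \<times> (nat \<Rightarrow> real) \<times> nat).
     fst t \<inter> {..<N} = F \<and>
     real k * norm (\<Sum>n<snd (snd t). fst (snd t) n *\<^sub>R e n)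
       < norm (\<Sum>n<snd (snd t). fst (snd t) n *\<^sub>R (if n \<in> fst t then d n else 0)))"
  have exP: "\<exists>t. P F N k t" if "F \<subseteq> {..<N}" for F N k
  proof -
    have "\<not> (\<forall>A. A \<inter> {..<N} = F \<longrightarrow> Bnd e d A (real k))"
      using loc[OF each that, of "real k"] nb by auto
    then obtain A where A: "A \<inter> {..<N} = F" "\<not> Bnd e d A (real k)" by blast
    then obtain a M where "\<not> norm (\<Sum>n<M. a n *\<^sub>R (if n \<in> A then d n else 0)) \<le> real k * norm (\<Sum>n<M. a n *\<^sub>R e n)"
      unfolding Bnd_def dom_bound_def by blast
    then have "P F N k (A, a, M)" using A(1) by (simp add: P_def)
    then show ?thesis by blast
  qed
  define pk where "pk = (\<lambda>F N k. SOME t. P F N k t)"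
  have pkP: "F \<subseteq> {..<N} \<Longrightarrow> P F N k (pk F N k)" for F N k
    unfolding pk_def using exP by (rule someI_ex)
  define st where "st = rec_nat ({}, 0) (\<lambda>k s. (fst (pk (fst s) (snd s) k) \<inter> {..< snd s + snd (snd (pk (fst s) (snd s) k))},
                                                snd s + snd (snd (pk (fst s) (snd s) k))))"
  define FF where "FF k = fst (st k)" for k
  define NN where "NN k = snd (st k)" for k
  define TT where "TT k = pk (FF k) (NN k) k" for k
  have st0: "FF 0 = {}" "NN 0 = 0" by (simp_all add: FF_def NN_def st_def)
  have stS: "FF (Suc k) = fst (TT k) \<inter> {..< NN k + snd (snd (TT k))}"
     "NN (Suc k) = NN k + snd (snd (TT k))" for k
    by (simp_all add: FF_def NN_def TT_def st_def)
  have inv: "FF k \<subseteq> {..<NN k}" for k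
    by (cases k) (auto simp: st0 stS)
  have PT: "P (FF k) (NN k) k (TT k)" for k
    unfolding TT_def by (rule pkP[OF inv])
  have pre: "fst (TT k) \<inter> {..<NN k} = FF k" for k
    using PT[of k] unfolding P_def by (rule conjunct1)
  have step: "FF (Suc k) \<inter> {..<NN k} = FF k" "NN k \<le> NN (Suc k)" for k
  proof -
    have "{..< NN k + snd (snd (TT k))} \<inter> {..<NN k} = {..<NN k}" by auto
    then show "FF (Suc k) \<inter> {..<NN k} = FF k" by (simp only: stS(1) Int_assoc pre)
    show "NN k \<le> NN (Suc k)" by (simp add: stS(2))
  qed
  have mono0: "FF (j + dd) \<inter> {..<NN j} = FF j \<and> NN j \<le> NN (j + dd)" for j dd
  proof (induction dd)
    case 0
    have "FF j \<inter> {..<NN j} = FF j" using inv[of j] by blast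
    then show ?case by simp
  next
    case (Suc dd)
    have le: "NN j \<le> NN (j + dd)" using Suc.IH by blast
    have e1: "{..<NN (j + dd)} \<inter> {..<NN j} = {..<NN j}" using le by auto
    have "FF (j + Suc dd) \<inter> {..<NN j} = (FF (Suc (j + dd)) \<inter> {..<NN (j + dd)}) \<inter> {..<NN j}"
      by (simp only: add_Suc_right Int_assoc e1)
    also have "\<dots> = FF j" using Suc.IH step(1)[of "j + dd"] by simp
    finally show ?case using le step(2)[of "j + dd"] by simp
  qed
  have mono: "FF j' \<inter> {..<NN j} = FF j \<and> NN j \<le> NN j'" if "j \<le> j'" for j j'
    using mono0[of j "j' - j"] that by simp
  define As where "As = (\<Union>k. FF k)"
  have memAs: "n \<in> As \<longleftrightarrow> n \<in> FF k" if "n < NN k" for n k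
  proof
    assume "n \<in> As"
    then obtain j where j: "n \<in> FF j" by (auto simp: As_def)
    show "n \<in> FF k"
    proof (cases "j \<le> k")
      case True then show ?thesis using mono[OF True] j inv[of j] by auto
    next
      case False then have "k \<le> j" by simp
      then show ?thesis using mono[of k j] j that by auto
    qed
  qed (auto simp: As_def)
  obtain K where K: "0 \<le> K" "Bnd e d As K" using each by blast
  obtain k :: nat where k: "K \<le> real k" using real_arch_simple by blast
  define a where "a = fst (snd (TT k))"
  define M where "M = snd (snd (TT k))"
  define A where "A = fst (TT k)"
  have "\<And>n. n < M \<Longrightarrow> (n \<in> As \<longleftrightarrow> n \<in> A)"
  proof -
    fix n assume "n < M"
    then have "n < NN (Suc k)" by (simp add: stS M_def)
    then have "n \<in> As \<longleftrightarrow> n \<in> FF (Suc k)" by (rule memAs)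
    also have "\<dots> \<longleftrightarrow> n \<in> A" using \<open>n < M\<close> by (auto simp: stS A_def M_def)
    finally show "n \<in> As \<longleftrightarrow> n \<in> A" .
  qed
  then have sameS: "(\<Sum>n<M. a n *\<^sub>R (if n \<in> As then d n else 0)) = (\<Sum>n<M. a n *\<^sub>R (if n \<in> A then d n else 0))"
    by (intro sum.cong) auto
  have big: "real k * norm (\<Sum>n<M. a n *\<^sub>R e n) < norm (\<Sum>n<M. a n *\<^sub>R (if n \<in> A then d n else 0))"
    using PT[of k] unfolding P_def a_def M_def A_def by (rule conjunct2)
  have "norm (\<Sum>n<M. a n *\<^sub>R (if n \<in> As then d n else 0)) \<le> K * norm (\<Sum>n<M. a n *\<^sub>R e n)"
    using K(2) unfolding Bnd_def by (rule dom_boundD)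
  also have "\<dots> \<le> real k * norm (\<Sum>n<M. a n *\<^sub>R e n)" using k by (intro mult_right_mono) auto
  finally show False using big sameS by simp
qed


lemma cube:
  fixes v :: "nat \<Rightarrow> 'a::real_normed_vector"
  assumes t: "\<And>n. 0 \<le> t n \<and> t n \<le> 1"
  shows "(\<And>A. A \<subseteq> {..<N} \<Longrightarrow> norm (w + (\<Sum>n\<in>A. v n)) \<le> K) \<Longrightarrow> norm (w + (\<Sum>n<N. t n *\<^sub>R v n)) \<le> K"
proof (induction N arbitrary: w)
  case 0
  then show ?case using "0.prems"[of "{}"] by simp
next
  case (Suc N)
  let ?S = "(\<Sum>n<N. t n *\<^sub>R v n)"
  have h1: "norm (w + ?S) \<le> K"
  proof (rule Suc.IH)
    fix A assume "A \<subseteq> {..<N}"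
    then have "A \<subseteq> {..<Suc N}" by auto
    then show "norm (w + (\<Sum>n\<in>A. v n)) \<le> K" by (rule Suc.prems)
  qed
  have h2: "norm ((w + v N) + ?S) \<le> K"
  proof (rule Suc.IH)
    fix A assume A: "A \<subseteq> {..<N}"
    then have "N \<notin> A" by auto
    then have "(\<Sum>n\<in>insert N A. v n) = v N + (\<Sum>n\<in>A. v n)"
      using A finite_subset by (subst sum.insert) auto
    moreover have "insert N A \<subseteq> {..<Suc N}" using A by auto
    ultimately show "norm (w + v N + (\<Sum>n\<in>A. v n)) \<le> K" using Suc.prems[of "insert N A"]
      by (simp add: add.assoc)
  qed
  have eq: "w + (\<Sum>n<Suc N. t n *\<^sub>R v n) = (1 - t N) *\<^sub>R (w + ?S) + t N *\<^sub>R ((w + v N) + ?S)"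
    by (simp add: algebra_simps)
  have "norm ((1 - t N) *\<^sub>R (w + ?S) + t N *\<^sub>R ((w + v N) + ?S))
      \<le> (1 - t N) * norm (w + ?S) + t N * norm ((w + v N) + ?S)"
    using t[of N] by (metis (no_types, lifting) abs_of_nonneg diff_ge_0_iff_ge norm_scaleR norm_triangle_ineq)
  also have "\<dots> \<le> (1 - t N) * K + t N * K"
    using t[of N] h1 h2 by (intro add_mono mult_left_mono) auto
  also have "\<dots> = K" by (simp add: algebra_simps)
  finally show ?case unfolding eq .
qed

lemma bound01:
  fixes e d :: "nat \<Rightarrow> 'a::real_normed_vector"
  assumes B: "\<forall>A. Bnd e d A K0" and s: "\<And>n. 0 \<le> s n \<and> s n \<le> 1"
  shows "norm (\<Sum>n<N. a n *\<^sub>R (s n *\<^sub>R d n)) \<le> K0 * norm (\<Sum>n<N. a n *\<^sub>R e n)"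
proof -
  have "norm (0 + (\<Sum>n<N. s n *\<^sub>R (a n *\<^sub>R d n))) \<le> K0 * norm (\<Sum>n<N. a n *\<^sub>R e n)"
  proof (rule cube[OF s])
    fix A assume A: "A \<subseteq> {..<N}"
    have "(\<Sum>n<N. a n *\<^sub>R (if n \<in> A then d n else 0)) = (\<Sum>n\<in>{..<N}. if n \<in> A then a n *\<^sub>R d n else 0)"
      by (rule sum.cong) auto
    also have "\<dots> = (\<Sum>n\<in>{..<N} \<inter> A. a n *\<^sub>R d n)" by (rule sum.inter_restrict[symmetric]) simp
    also have "{..<N} \<inter> A = A" using A by auto
    finally have eq: "(\<Sum>n<N. a n *\<^sub>R (if n \<in> A then d n else 0)) = (\<Sum>n\<in>A. a n *\<^sub>R d n)" .
    have "norm (\<Sum>n<N. a n *\<^sub>R (if n \<in> A then d n else 0)) \<le> K0 * norm (\<Sum>n<N. a n *\<^sub>R e n)"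
    proof -
      have "Bnd e d A K0" using B by blast
      then show ?thesis unfolding Bnd_def by (rule dom_boundD)
    qed
    then show "norm (0 + (\<Sum>n\<in>A. a n *\<^sub>R d n)) \<le> K0 * norm (\<Sum>n<N. a n *\<^sub>R e n)" unfolding eq by simp
  qed
  then show ?thesis by (simp add: mult.commute)
qed

lemma half01: "- 1 \<le> (u::real) \<Longrightarrow> u \<le> 1 \<Longrightarrow> 0 \<le> (u + 1) / 2 \<and> (u + 1) / 2 \<le> 1"
  by simp

lemma boundT:
  fixes e d :: "nat \<Rightarrow> 'a::real_normed_vector" and t :: "nat \<Rightarrow>\<^sub>C real"
  assumes B: "\<forall>A. Bnd e d A K0" and K0: "0 \<le> K0"
  shows "dom_bound e (\<lambda>n. t n *\<^sub>R d n) (3 * K0 * norm t)"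
  unfolding dom_bound_def
proof (intro allI)
  fix a :: "nat \<Rightarrow> real" and N
  let ?x = "norm (\<Sum>n<N. a n *\<^sub>R e n)"
  have tb: "\<bar>t n\<bar> \<le> norm t" for n using norm_bounded[of t n] by simp
  show "norm (\<Sum>n<N. a n *\<^sub>R (t n *\<^sub>R d n)) \<le> 3 * K0 * norm t * ?x"
  proof (cases "norm t = 0")
    case True
    then have "t n = 0" for n using tb[of n] by simp
    then show ?thesis using True by simp
  next
    case False
    define M where "M = norm t"
    have M: "M > 0" using False norm_ge_zero[of t] unfolding M_def by linarith
    define s where "s n = (t n / M + 1) / 2" for n
    have s01: "0 \<le> s n \<and> s n \<le> 1" for n
    proof -
      have "\<bar>t n\<bar> \<le> M" using tb[of n] unfolding M_def .
      then have "\<bar>t n\<bar> / M \<le> 1" using M by (simp only: divide_le_eq_1_pos)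
      then have "\<bar>t n / M\<bar> \<le> 1" by (simp only: abs_divide abs_of_pos[OF M])
      then have "- 1 \<le> t n / M \<and> t n / M \<le> 1" using abs_le_D1 abs_le_D2 by fastforce
      then have h1: "- 1 \<le> t n / M" and h2: "t n / M \<le> 1" by auto
      show ?thesis unfolding s_def by (rule half01[OF h1 h2])
    qed
    have one: "0 \<le> (\<lambda>n::nat. 1::real) n \<and> (\<lambda>n::nat. 1::real) n \<le> 1" for n by simp
    have tn: "t n = M * (2 * s n - 1)" for n using M by (simp add: s_def field_simps)
    let ?X = "(\<Sum>n<N. a n *\<^sub>R (s n *\<^sub>R d n))"
    let ?Y = "(\<Sum>n<N. a n *\<^sub>R (1 *\<^sub>R d n))"
    have termeq: "a n *\<^sub>R (t n *\<^sub>R d n) = M *\<^sub>R (2 *\<^sub>R (a n *\<^sub>R (s n *\<^sub>R d n)) - a n *\<^sub>R (1 *\<^sub>R d n))" for n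
    proof -
      have "a n *\<^sub>R (t n *\<^sub>R d n) = (a n * t n) *\<^sub>R d n" by simp
      also have "a n * t n = M * 2 * a n * s n - M * a n" unfolding tn by (simp add: algebra_simps)
      also have "(M * 2 * a n * s n - M * a n) *\<^sub>R d n = M *\<^sub>R (2 *\<^sub>R (a n *\<^sub>R (s n *\<^sub>R d n)) - a n *\<^sub>R (1 *\<^sub>R d n))"
        by (simp add: scaleR_diff_right scaleR_diff_left mult.assoc)
      finally show ?thesis .
    qed
    have "(\<Sum>n<N. a n *\<^sub>R (t n *\<^sub>R d n)) = M *\<^sub>R (2 *\<^sub>R ?X - ?Y)"
      unfolding termeq by (simp only: scaleR_sum_right[symmetric] sum_subtractf)
    then have "norm (\<Sum>n<N. a n *\<^sub>R (t n *\<^sub>R d n)) = M * norm (2 *\<^sub>R ?X - ?Y)"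
      using M by simp
    also have "\<dots> \<le> M * (2 * norm ?X + norm ?Y)"
    proof (rule mult_left_mono)
      have "norm (2 *\<^sub>R ?X - ?Y) \<le> norm (2 *\<^sub>R ?X) + norm ?Y" by (rule norm_triangle_ineq4)
      then show "norm (2 *\<^sub>R ?X - ?Y) \<le> 2 * norm ?X + norm ?Y" by simp
    qed (use M in simp)
    also have "\<dots> \<le> M * (2 * (K0 * ?x) + K0 * ?x)"
      using bound01[OF B s01, where a=a and N=N] bound01[OF B one, where a=a and N=N] M
      by (intro mult_left_mono add_mono) auto
    also have "\<dots> = 3 * K0 * norm t * ?x" by (simp add: M_def algebra_simps)
    finally show ?thesis .
  qed
qed


theorem theorem2p4:
  fixes e :: "nat \<Rightarrow> 'a::banach"
  assumes "schauder_basis e"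
    and "seminormalized e"
    and "quasisubsymmetric e"
  shows "\<exists>T :: (nat \<Rightarrow>\<^sub>C real) \<Rightarrow> ('a \<Rightarrow>\<^sub>L 'a). isomorphic_embedding T"
proof -
  note b = assms(1) and sn = assms(2) and qs = assms(3)
  obtain \<delta> p q where \<delta>: "\<delta> > 0"
    and pq: "\<And>n. p n < q n \<and> q n < p (Suc n) \<and> \<delta> \<le> norm (e (q n) - e (p n))"
    using pairs[OF not_Cauchy[OF b sn qs]] by blast
  define d where "d n = e (q n) - e (p n)" for n
  have smp: "strict_mono p" unfolding strict_mono_Suc_iff
  proof
    fix n show "p n < p (Suc n)" using pq[of n] by linarith
  qed
  have each: "\<forall>A. \<exists>K. 0 \<le> K \<and> Bnd e d A K"
  proof
    fix A
    define l where "l n = (if n \<in> A then q n else p n)" for n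
    have sml: "strict_mono l" unfolding strict_mono_Suc_iff
    proof
      fix n
      have "l n \<le> q n" using pq[of n] by (simp add: l_def)
      moreover have "p (Suc n) \<le> l (Suc n)" using pq[of "Suc n"] by (simp add: l_def)
      ultimately show "l n < l (Suc n)" using pq[of n] by linarith
    qed
    obtain C1 where C1: "C1 > 0" "dom_bound e (\<lambda>n. e (l n)) C1" using qs_dom[OF qs sml] by blast
    obtain C2 where C2: "C2 > 0" "dom_bound e (\<lambda>n. e (p n)) C2" using qs_dom[OF qs smp] by blast
    have "Bnd e d A (C1 + C2)" unfolding Bnd_def dom_bound_def
    proof (intro allI)
      fix a :: "nat \<Rightarrow> real" and N
      let ?x = "norm (\<Sum>n<N. a n *\<^sub>R e n)"
      have termeq: "a n *\<^sub>R (if n \<in> A then d n else 0) = a n *\<^sub>R e (l n) - a n *\<^sub>R e (p n)" for n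
        by (simp add: l_def d_def scaleR_diff_right)
      have "(\<Sum>n<N. a n *\<^sub>R (if n \<in> A then d n else 0)) = (\<Sum>n<N. a n *\<^sub>R e (l n)) - (\<Sum>n<N. a n *\<^sub>R e (p n))"
        unfolding termeq by (rule sum_subtractf)
      then have "norm (\<Sum>n<N. a n *\<^sub>R (if n \<in> A then d n else 0)) \<le> norm (\<Sum>n<N. a n *\<^sub>R e (l n)) + norm (\<Sum>n<N. a n *\<^sub>R e (p n))"
        by (simp only: norm_triangle_ineq4)
      also have "\<dots> \<le> C1 * ?x + C2 * ?x"
        by (rule add_mono) (rule dom_boundD[OF C1(2)], rule dom_boundD[OF C2(2)])
      also have "\<dots> = (C1 + C2) * ?x" by (simp add: algebra_simps)
      finally show "norm (\<Sum>n<N. a n *\<^sub>R (if n \<in> A then d n else 0)) \<le> (C1 + C2) * ?x" .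
    qed
    moreover have "0 \<le> C1 + C2" using C1 C2 by simp
    ultimately show "\<exists>K. 0 \<le> K \<and> Bnd e d A K" by blast
  qed
  obtain K1 where K1: "\<forall>A. Bnd e d A K1" using hump[OF each] by blast
  define K0 where "K0 = max K1 0"
  have K00: "0 \<le> K0" by (simp add: K0_def)
  have K0B: "\<forall>A. Bnd e d A K0"
  proof
    fix A
    have "Bnd e d A K1" using K1 by blast
    then show "Bnd e d A K0" unfolding Bnd_def by (rule dom_bound_mono) (simp add: K0_def)
  qed
  define f where "f t n = apply_bcontfun t n *\<^sub>R d n" for t :: "nat \<Rightarrow>\<^sub>C real" and n
  have db: "dom_bound e (f t) (3 * K0 * norm t)" for t
    unfolding f_def by (rule boundT[OF K0B K00])
  have C0: "0 \<le> 3 * K0 * norm t" for t :: "nat \<Rightarrow>\<^sub>C real" using K00 by simp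
  have OS: "(\<lambda>n. coef e x n *\<^sub>R f t n) sums Op e (f t) x" for t x
    by (rule Op_sums[OF b db[of t] C0[of t]])
  have ON: "norm (Op e (f t) x) \<le> (3 * K0 * norm t) * norm x" for t x
    by (rule Op_norm[OF b db[of t] C0[of t]])
  have OB: "Op e (f t) (e m) = f t m" for t m
    by (rule Op_basis[OF b db[of t] C0[of t]])
  define T where "T t = Blinfun (Op e (f t))" for t
  have Tapp: "blinfun_apply (T t) = Op e (f t)" for t
    unfolding T_def by (rule bounded_linear_Blinfun_apply[OF Op_linear[OF b db[of t] C0[of t]]])
  have bl: "bounded_linear T"
  proof (rule bounded_linear_intro)
    fix t s :: "nat \<Rightarrow>\<^sub>C real"
    show "T (t + s) = T t + T s"
    proof (rule blinfun_eqI)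
      fix x
      have "(\<lambda>n. coef e x n *\<^sub>R f (t + s) n) sums (Op e (f t) x + Op e (f s) x)"
        using sums_add[OF OS[of x t] OS[of x s]] by (simp add: f_def scaleR_add_left scaleR_add_right)
      then have "Op e (f (t + s)) x = Op e (f t) x + Op e (f s) x"
        using OS[of x "t + s"] sums_unique2 by blast
      then show "blinfun_apply (T (t + s)) x = blinfun_apply (T t + T s) x"
        by (simp add: Tapp plus_blinfun.rep_eq)
    qed
  next
    fix r :: real and t :: "nat \<Rightarrow>\<^sub>C real"
    show "T (r *\<^sub>R t) = r *\<^sub>R T t"
    proof (rule blinfun_eqI)
      fix x
      have "(\<lambda>n. coef e x n *\<^sub>R f (r *\<^sub>R t) n) sums (r *\<^sub>R Op e (f t) x)"
        using sums_scaleR_right[OF OS[of x t], of r] by (simp add: f_def mult.left_commute)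
      then have "Op e (f (r *\<^sub>R t)) x = r *\<^sub>R Op e (f t) x"
        using OS[of x "r *\<^sub>R t"] sums_unique2 by blast
      then show "blinfun_apply (T (r *\<^sub>R t)) x = blinfun_apply (r *\<^sub>R T t) x"
        by (simp add: Tapp scaleR_blinfun.rep_eq)
    qed
  next
    fix t :: "nat \<Rightarrow>\<^sub>C real"
    have "norm (T t) \<le> 3 * K0 * norm t"
      by (rule norm_blinfun_bound[OF C0]) (simp only: Tapp ON)
    then show "norm (T t) \<le> norm t * (3 * K0)" by (simp add: mult.commute)
  qed
  obtain c Cm where cC: "0 < c" "\<And>n. c \<le> norm (e n) \<and> norm (e n) \<le> Cm"
    using sn unfolding seminormalized_def by blast
  have Cm: "Cm > 0" using cC(1) cC(2)[of 0] by linarith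
  have lower: "\<delta> / Cm * norm t \<le> norm (T t)" for t
  proof -
    have tn: "\<bar>t n\<bar> \<le> norm (T t) * Cm / \<delta>" for n
    proof -
      have "blinfun_apply (T t) (e n) = t n *\<^sub>R d n" by (simp add: Tapp OB f_def)
      then have "norm (blinfun_apply (T t) (e n)) = \<bar>t n\<bar> * norm (d n)" by simp
      moreover have "\<bar>t n\<bar> * \<delta> \<le> \<bar>t n\<bar> * norm (d n)"
        using pq[of n] by (intro mult_left_mono) (auto simp: d_def)
      moreover have "norm (blinfun_apply (T t) (e n)) \<le> norm (T t) * norm (e n)" by (rule norm_blinfun)
      moreover have "norm (T t) * norm (e n) \<le> norm (T t) * Cm"
        using cC(2)[of n] by (intro mult_left_mono) auto
      ultimately have "\<bar>t n\<bar> * \<delta> \<le> norm (T t) * Cm" by linarith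
      then show ?thesis using \<delta> by (simp add: pos_le_divide_eq)
    qed
    have "norm t \<le> norm (T t) * Cm / \<delta>" by (rule norm_bound) (use tn in simp)
    then have "norm t * \<delta> \<le> norm (T t) * Cm" using \<delta> by (simp add: pos_le_divide_eq)
    then show ?thesis using Cm by (simp add: field_simps)
  qed
  have "isomorphic_embedding T"
    unfolding isomorphic_embedding_def
  proof (intro conjI bl exI[of _ "\<delta> / Cm"] allI)
    show "0 < \<delta> / Cm" using \<delta> Cm by simp
    fix t show "\<delta> / Cm * norm t \<le> norm (T t)" by (rule lower)
  qed
  then show ?thesis by blast
qed

end
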